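(* Let $A$ be an $n\times n$ real symmetric positive semidefinite matrix. If $n\ge4$, then for any $S\subseteq[n]\setminus\{1,2,3,4\}$ and any $r\in\mathbb{R}$, \[ (r+1)\,A_{S\cup\{1,4\}}A_{S\cup\{2,3\}}+r(r+1)\,A_{S\cup\{1,3\}}A_{S\cup\{2,4\}}\;\ge\; r\,A_{S\cup\{1,2\}}A_{S\cup\{3,4\}}. \] If $n\ge3$, then for any $S\subseteq[n]\setminus\{1,2,3\}$ and any $r\in\mathbb{R}$, \[ (r+1)\,A_{S\cup\{1\}}A_{S\cup\{2,3\}}+r(r+1)\,A_{S\cup\{2\}}A_{S\cup\{1,3\}}\;\ge\; r\,A_{S\cup\{3\}}A_{S\cup\{1,2\}}. \] Moreover these inequalities are tight for every $r\in\mathbb{R}$, in the sense that the infimum of the left-hand side minus the right-hand side over all $n\times n$ real symmetric positive semidefinite matrices is $0$.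
   Context: $A_S$ denotes the principal minor of $A$ with rows and columns indexed by $S$ ($A_\emptyset=1$). *)

theory Defs
  imports Complex_Main "HOL-Combinatorics.Permutations"
begin

text \<open>An n x n real matrix is represented as a function nat => nat => real whose
entries at indices in {1..n} are relevant (indices [n] = {1..n} as in the paper).\<close>

definition sym_psd :: "nat \<Rightarrow> (nat \<Rightarrow> nat \<Rightarrow> real) \<Rightarrow> bool" where
  "sym_psd n A \<longleftrightarrow>
     (\<forall>i\<in>{1..n}. \<forall>j\<in>{1..n}. A i j = A j i) \<and>
     (\<forall>x :: nat \<Rightarrow> real. 0 \<le> (\<Sum>i\<in>{1..n}. \<Sum>j\<in>{1..n}. x i * A i j * x j))"

text \<open>Principal minor A_S: the determinant (Leibniz formula) of the submatrix with
rows and columns indexed by S; A_{} = 1.\<close>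

definition pminor :: "(nat \<Rightarrow> nat \<Rightarrow> real) \<Rightarrow> nat set \<Rightarrow> real" where
  "pminor A S = (\<Sum>p | p permutes S. of_int (sign p) * (\<Prod>i\<in>S. A i (p i)))"

end

theory Submission imports Defs begin


definition qf :: "nat set \<Rightarrow> (nat \<Rightarrow> nat \<Rightarrow> real) \<Rightarrow> (nat \<Rightarrow> real) \<Rightarrow> real" where
  "qf I A x = (\<Sum>i\<in>I. \<Sum>j\<in>I. x i * A i j * x j)"

definition psd_on :: "nat set \<Rightarrow> (nat \<Rightarrow> nat \<Rightarrow> real) \<Rightarrow> bool" where
  "psd_on I A \<longleftrightarrow> (\<forall>i\<in>I. \<forall>j\<in>I. A i j = A j i) \<and> (\<forall>x. 0 \<le> qf I A x)"

lemma sym_psd_psd_on: "sym_psd n A = psd_on {1..n} A"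
  unfolding sym_psd_def psd_on_def qf_def by simp

lemma qf_restrict:
  assumes "finite I" "J \<subseteq> I"
  shows "qf J A x = qf I A (\<lambda>i. if i \<in> J then x i else 0)"
proof -
  have "qf J A x = (\<Sum>i\<in>I \<inter> J. \<Sum>j\<in>I \<inter> J. x i * A i j * x j)"
    using assms by (simp add: qf_def Int_absorb1)
  also have "\<dots> = (\<Sum>i\<in>I. if i \<in> J then (\<Sum>j\<in>I. if j \<in> J then x i * A i j * x j else 0) else 0)"
    using assms by (simp add: sum.inter_restrict)
  also have "\<dots> = qf I A (\<lambda>i. if i \<in> J then x i else 0)"
    unfolding qf_def by (auto intro!: sum.cong)
  finally show ?thesis .
qed

lemma psd_on_mono:
  assumes "psd_on I A" "finite I" "J \<subseteq> I"
  shows "psd_on J A"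
proof -
  have "\<forall>i\<in>J. \<forall>j\<in>J. A i j = A j i" using assms unfolding psd_on_def by blast
  moreover have "0 \<le> qf J A x" for x
    using assms unfolding psd_on_def qf_restrict[OF assms(2,3)] by blast
  ultimately show ?thesis unfolding psd_on_def by blast
qed

lemma qf_two:
  assumes "i \<noteq> j"
  shows "qf {i,j} A x = x i * A i i * x i + x i * A i j * x j + x j * A j i * x i + x j * A j j * x j"
  using assms by (simp add: qf_def)

lemma psd_diag:
  assumes "psd_on I A" "finite I" "i \<in> I"
  shows "0 \<le> A i i"
proof -
  have "psd_on {i} A" by (rule psd_on_mono[OF assms(1,2)]) (use assms(3) in auto)
  then have "0 \<le> qf {i} A (\<lambda>_. 1)" unfolding psd_on_def by blast
  then show ?thesis by (simp add: qf_def)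
qed

lemma psd_two:
  assumes "psd_on I A" "finite I" "i \<in> I" "j \<in> I" "i \<noteq> j"
  shows "\<And>t. 0 \<le> t * t * A i i + 2 * t * A i j + A j j"
proof -
  fix t
  have p: "psd_on {i,j} A" by (rule psd_on_mono[OF assms(1,2)]) (use assms(3,4) in auto)
  then have "0 \<le> qf {i,j} A (\<lambda>k. if k = i then t else 1)" unfolding psd_on_def by blast
  moreover have "A j i = A i j" using assms unfolding psd_on_def by auto
  ultimately show "0 \<le> t * t * A i i + 2 * t * A i j + A j j"
    using assms(5) by (simp add: qf_two algebra_simps)
qed

lemma psd_zero_row:
  assumes "psd_on I A" "finite I" "i \<in> I" "j \<in> I" "A i i = 0"
  shows "A i j = 0"
proof (cases "i = j")
  case True then show ?thesis using assms by simp
next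
  case False
  note h = psd_two[OF assms(1-4) False]
  show ?thesis
  proof (rule ccontr)
    assume ne: "A i j \<noteq> 0"
    have "0 \<le> (-(A j j + 1) / (2 * A i j)) * (-(A j j + 1) / (2 * A i j)) * A i i
      + 2 * (-(A j j + 1) / (2 * A i j)) * A i j + A j j" by (rule h)
    also have "\<dots> = -1" using ne assms(5) by (simp add: field_simps)
    finally show False by simp
  qed
qed

lemma psd_minor2:
  assumes "psd_on I A" "finite I" "i \<in> I" "j \<in> I"
  shows "A i j * A i j \<le> A i i * A j j"
proof (cases "i = j")
  case True then show ?thesis by simp
next
  case False
  note h = psd_two[OF assms(1-4) False]
  show ?thesis
  proof (cases "A i i = 0")
    case True
    then show ?thesis using psd_zero_row[OF assms True] by simp
  next
    case nz: False
    have pos: "0 < A i i" using psd_diag[OF assms(1-3)] nz by simp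
    have "0 \<le> (- A i j / A i i) * (- A i j / A i i) * A i i + 2 * (- A i j / A i i) * A i j + A j j"
      by (rule h)
    also have "\<dots> = (A i i * A j j - A i j * A i j) / A i i" using nz by (simp add: field_simps)
    finally show ?thesis using pos by (simp add: divide_nonneg_pos zero_le_divide_iff)
  qed
qed


definition piv :: "(nat \<Rightarrow> nat \<Rightarrow> real) \<Rightarrow> nat \<Rightarrow> nat \<Rightarrow> nat \<Rightarrow> real" where
  "piv A s = (\<lambda>i j. A i j - A i s * A s j / A s s)"

lemma qf_shift:
  assumes "finite I" "s \<in> I"
  shows "qf I A (\<lambda>i. x i + (if i = s then t else 0)) =
    qf I A x + t * (\<Sum>j\<in>I. A s j * x j) + t * (\<Sum>i\<in>I. x i * A i s) + t * t * A s s"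
proof -
  have pt: "(x i + (if i = s then t else 0)) * A i j * (x j + (if j = s then t else 0)) =
     x i * A i j * x j + (if i = s then t * (A s j * x j) else 0) + (if j = s then t * (x i * A i s) else 0)
     + (if i = s then (if j = s then t * t * A s s else 0) else 0)" for i j
    by (auto simp: algebra_simps)
  have ifsum: "(\<Sum>j\<in>I. if P then f j else 0) = (if P then (\<Sum>j\<in>I. f j) else 0)" for P and f :: "nat \<Rightarrow> real"
    by simp
  show ?thesis
    unfolding qf_def pt sum.distrib ifsum
    using assms by (simp add: sum.delta sum_distrib_left)
qed

lemma qf_piv:
  "qf I (piv A s) x = qf I A x - (\<Sum>i\<in>I. x i * A i s) * (\<Sum>j\<in>I. A s j * x j) / A s s"
proof -
  have pt: "x i * piv A s i j * x j = x i * A i j * x j - (x i * A i s) * (A s j * x j) / A s s" for i j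
    by (simp add: piv_def algebra_simps diff_divide_distrib)
  show ?thesis
    unfolding qf_def pt sum_subtractf sum_divide_distrib[symmetric] sum_product by simp
qed

lemma psd_piv:
  assumes "psd_on I A" "finite I" "s \<in> I" "0 < A s s"
  shows "psd_on I (piv A s)"
proof -
  have sym: "\<forall>i\<in>I. \<forall>j\<in>I. A i j = A j i" using assms(1) unfolding psd_on_def by blast
  have "\<forall>i\<in>I. \<forall>j\<in>I. piv A s i j = piv A s j i"
    using sym assms(3) by (simp add: piv_def)
  moreover have "0 \<le> qf I (piv A s) x" for x
  proof -
    define L where "L = (\<Sum>j\<in>I. A s j * x j)"
    have L2: "(\<Sum>i\<in>I. x i * A i s) = L"
      unfolding L_def using sym assms(3) by (intro sum.cong refl) (simp add: mult.commute)
    have "0 \<le> qf I A (\<lambda>i. x i + (if i = s then - L / A s s else 0))"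
      using assms(1) unfolding psd_on_def by blast
    also have "\<dots> = qf I A x - L * L / A s s"
      unfolding qf_shift[OF assms(2,3)] L2 L_def[symmetric] using assms(4)
      by (simp add: field_simps)
    also have "\<dots> = qf I (piv A s) x"
      unfolding qf_piv L2 L_def by simp
    finally show ?thesis .
  qed
  ultimately show ?thesis unfolding psd_on_def by blast
qed

lemma piv_row: "A s s \<noteq> 0 \<Longrightarrow> piv A s s j = 0"
  by (simp add: piv_def)

lemma piv_col: "A s s \<noteq> 0 \<Longrightarrow> piv A s i s = 0"
  by (simp add: piv_def)


lemma pminor_cong:
  assumes "\<And>i j. i \<in> T \<Longrightarrow> j \<in> T \<Longrightarrow> M i j = N i j"
  shows "pminor M T = pminor N T"
  unfolding pminor_def
  by (intro sum.cong refl arg_cong2[where f="(*)"] prod.cong) (auto simp: assms permutes_in_image)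

lemma pminor_zero_row:
  assumes "finite T" "i \<in> T" "\<And>j. j \<in> T \<Longrightarrow> M i j = 0"
  shows "pminor M T = 0"
  unfolding pminor_def
proof (intro sum.neutral ballI)
  fix p assume "p \<in> {p. p permutes T}"
  then have "p i \<in> T" using assms(2) by (simp add: permutes_in_image)
  then have "(\<Prod>j\<in>T. M j (p j)) = 0"
    using assms by (intro prod_zero) auto
  then show "of_int (sign p) * (\<Prod>j\<in>T. M j (p j)) = 0" by simp
qed

lemma pminor_dup:
  assumes fin: "finite T" and i: "i \<in> T" and k: "k \<in> T" and ik: "i \<noteq> k"
    and eq: "\<And>j. j \<in> T \<Longrightarrow> M i j = M k j"
  shows "pminor M T = 0"
proof -
  define P where "P = {p. p permutes T}"
  define \<tau> where "\<tau> = transpose i k"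
  define f where "f p = of_int (sign p) * (\<Prod>j\<in>T. M j (p j))" for p
  have tp: "\<tau> permutes T" unfolding \<tau>_def using i k by (rule permutes_swap_id)
  have tt: "\<tau> \<circ> \<tau> = id" unfolding \<tau>_def by simp
  have bij: "bij_betw (\<lambda>p. p \<circ> \<tau>) P P"
  proof (rule bij_betwI[where g="\<lambda>p. p \<circ> \<tau>"])
    show "(\<lambda>p. p \<circ> \<tau>) \<in> P \<rightarrow> P" unfolding P_def using tp by (auto intro: permutes_compose)
    show "(\<lambda>p. p \<circ> \<tau>) \<in> P \<rightarrow> P" unfolding P_def using tp by (auto intro: permutes_compose)
    show "(p \<circ> \<tau>) \<circ> \<tau> = p" for p by (simp add: comp_assoc tt)
    show "(p \<circ> \<tau>) \<circ> \<tau> = p" for p by (simp add: comp_assoc tt)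
  qed
  have btau: "bij_betw \<tau> T T" using tp by (rule permutes_imp_bij)
  have neg: "f (p \<circ> \<tau>) = - f p" if p: "p \<in> P" for p
  proof -
    have pp: "p permutes T" using p unfolding P_def by simp
    have sgn: "sign (p \<circ> \<tau>) = - sign p"
      using sign_compose[of p \<tau>] permutation_permutes fin pp tp ik
      by (auto simp: \<tau>_def sign_swap_id)
    have "(\<Prod>j\<in>T. M j ((p \<circ> \<tau>) j)) = (\<Prod>j\<in>T. M (\<tau> j) (p j))"
    proof -
      have "(\<Prod>j\<in>T. M (\<tau> (\<tau> j)) (p (\<tau> j))) = (\<Prod>j\<in>T. M (\<tau> j) (p j))"
        by (rule prod.reindex_bij_betw[OF btau, of "\<lambda>j. M (\<tau> j) (p j)"])
      moreover have "\<tau> (\<tau> j) = j" for j using tt by (metis comp_apply id_apply)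
      ultimately show ?thesis by simp
    qed
    also have "\<dots> = (\<Prod>j\<in>T. M j (p j))"
    proof (rule prod.cong[OF refl])
      fix j assume j: "j \<in> T"
      then have "p j \<in> T" using pp by (simp add: permutes_in_image)
      then show "M (\<tau> j) (p j) = M j (p j)"
        using eq by (auto simp: \<tau>_def transpose_def)
    qed
    finally show ?thesis unfolding f_def sgn by simp
  qed
  have "sum f P = sum (\<lambda>p. f (p \<circ> \<tau>)) P"
    by (rule sum.reindex_bij_betw[OF bij, symmetric])
  also have "\<dots> = - sum f P" using neg by (simp add: sum_negf)
  finally have "sum f P = 0" by simp
  then show ?thesis unfolding pminor_def f_def P_def .
qed

lemma pminor_row_add:
  assumes fin: "finite T" and i: "i \<in> T"
  shows "pminor (M(i := (\<lambda>j. M i j + c * R j))) T = pminor M T + c * pminor (M(i := R)) T"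
proof -
  have pt: "(\<Prod>j\<in>T. (M(i := (\<lambda>j. M i j + c * R j))) j (p j)) =
    (\<Prod>j\<in>T. M j (p j)) + c * (\<Prod>j\<in>T. (M(i := R)) j (p j))" for p
  proof -
    have e1: "(\<Prod>j\<in>T - {i}. (M(i := (\<lambda>j. M i j + c * R j))) j (p j)) = (\<Prod>j\<in>T - {i}. M j (p j))"
      by (intro prod.cong) auto
    have e2: "(\<Prod>j\<in>T - {i}. (M(i := R)) j (p j)) = (\<Prod>j\<in>T - {i}. M j (p j))"
      by (intro prod.cong) auto
    show ?thesis
      unfolding prod.remove[OF fin i, of "\<lambda>j. (M(i := (\<lambda>j. M i j + c * R j))) j (p j)"]
        prod.remove[OF fin i, of "\<lambda>j. M j (p j)"] prod.remove[OF fin i, of "\<lambda>j. (M(i := R)) j (p j)"]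
        e1 e2 by (simp add: algebra_simps)
  qed
  show ?thesis
    unfolding pminor_def pt by (simp add: algebra_simps sum.distrib sum_distrib_left)
qed

lemma pminor_row_op:
  assumes fin: "finite T" and i: "i \<in> T" and k: "k \<in> T" and ik: "i \<noteq> k"
  shows "pminor (M(i := (\<lambda>j. M i j + c * M k j))) T = pminor M T"
proof -
  have "pminor (M(i := M k)) T = 0"
    by (rule pminor_dup[OF fin i k ik]) (use ik in simp)
  then show ?thesis using pminor_row_add[OF fin i, of M c "M k"] by simp
qed

lemma pminor_elim:
  assumes fin: "finite T" and s: "s \<in> T"
  shows "pminor (\<lambda>i j. if i = s then A i j else A i j - A i s / A s s * A s j) T = pminor A T"
proof -
  define CR where "CR R = (\<lambda>i j. if i \<in> R then A i j - A i s / A s s * A s j else A i j)" for R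
  have "finite R \<Longrightarrow> R \<subseteq> T - {s} \<Longrightarrow> pminor (CR R) T = pminor A T" for R
  proof (induction R rule: finite_induct)
    case empty
    then show ?case by (simp add: CR_def)
  next
    case (insert r R)
    have rT: "r \<in> T" "r \<noteq> s" using insert.prems by auto
    have eq: "CR (insert r R) = (CR R)(r := (\<lambda>j. CR R r j + (- A r s / A s s) * CR R s j))"
      using insert.hyps insert.prems by (auto simp: CR_def fun_eq_iff)
    show ?case unfolding eq pminor_row_op[OF fin rT(1) s rT(2)]
      using insert by simp
  qed
  from this[of "T - {s}"] fin have "pminor (CR (T - {s})) T = pminor A T" by simp
  moreover have "pminor (\<lambda>i j. if i = s then A i j else A i j - A i s / A s s * A s j) T = pminor (CR (T - {s})) T"
    by (rule pminor_cong) (auto simp: CR_def)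
  ultimately show ?thesis by simp
qed

lemma pminor_col_expand:
  assumes fin: "finite T" and s: "s \<in> T" and z: "\<And>i. i \<in> T \<Longrightarrow> i \<noteq> s \<Longrightarrow> C i s = 0"
  shows "pminor C T = C s s * pminor C (T - {s})"
proof -
  define f where "f p = of_int (sign p) * (\<Prod>j\<in>T. C j (p j))" for p
  have PQ: "{p. p permutes (T - {s})} \<subseteq> {p. p permutes T}"
    by (auto intro: permutes_subset)
  have zero: "f p = 0" if "p \<in> {p. p permutes T} - {p. p permutes (T - {s})}" for p
  proof -
    have pp: "p permutes T" and nq: "\<not> p permutes (T - {s})" using that by auto
    have ps: "p s \<noteq> s"
    proof
      assume "p s = s"
      then have "p permutes (T - {s})"
        using permutes_superset[OF pp, of "T - {s}"] by auto
      with nq show False by simp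
    qed
    have "s \<in> p ` T" using permutes_image[OF pp] s by simp
    then obtain i where i: "i \<in> T" "p i = s" by auto
    have "i \<noteq> s" using i ps by auto
    then have "(\<Prod>j\<in>T. C j (p j)) = 0"
      using i z fin by (intro prod_zero) (auto intro!: bexI[of _ i])
    then show ?thesis unfolding f_def by simp
  qed
  have "pminor C T = sum f {p. p permutes T}" unfolding pminor_def f_def ..
  also have "\<dots> = sum f {p. p permutes (T - {s})}"
    by (rule sum.mono_neutral_right[OF _ PQ]) (use fin zero in \<open>auto simp add: finite_permutations\<close>)
  also have "\<dots> = (\<Sum>p | p permutes (T - {s}). C s s * (of_int (sign p) * (\<Prod>j\<in>T - {s}. C j (p j))))"
  proof (rule sum.cong[OF refl])
    fix p assume "p \<in> {p. p permutes (T - {s})}"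
    then have pp: "p permutes (T - {s})" by simp
    then have "p s = s" by (simp add: permutes_not_in)
    then show "f p = C s s * (of_int (sign p) * (\<Prod>j\<in>T - {s}. C j (p j)))"
      unfolding f_def prod.remove[OF fin s] by simp
  qed
  also have "\<dots> = C s s * pminor C (T - {s})"
    unfolding pminor_def by (simp add: sum_distrib_left)
  finally show ?thesis .
qed

lemma pminor_pivot:
  assumes fin: "finite T" and s: "s \<in> T" and nz: "A s s \<noteq> 0"
  shows "pminor A T = A s s * pminor (piv A s) (T - {s})"
proof -
  define C where "C = (\<lambda>i j. if i = s then A i j else A i j - A i s / A s s * A s j)"
  have "pminor A T = pminor C T" unfolding C_def using pminor_elim[OF fin s] by simp
  also have "\<dots> = C s s * pminor C (T - {s})"
    by (rule pminor_col_expand[OF fin s]) (use nz in \<open>simp add: C_def\<close>)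
  also have "pminor C (T - {s}) = pminor (piv A s) (T - {s})"
    by (rule pminor_cong) (auto simp: C_def piv_def)
  finally show ?thesis by (simp add: C_def)
qed

lemma pminor_two:
  assumes "i \<noteq> j"
  shows "pminor A {i, j} = A i i * A j j - A i j * A j i"
proof -
  have "pminor A {i,j} = (\<Sum>b\<in>{i,j}. \<Sum>q\<in>{p. p permutes {j}}.
      of_int (sign (transpose i b \<circ> q)) * (\<Prod>k\<in>{i,j}. A k ((transpose i b \<circ> q) k)))"
    unfolding pminor_def using assms
    by (subst sum_over_permutations_insert) auto
  also have "\<dots> = A i i * A j j - A i j * A j i"
    using assms by (simp add: sign_swap_id)
  finally show ?thesis .
qed

lemma pminor_one: "pminor A {i} = A i i"
  unfolding pminor_def by simp


lemma qf_insert: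
  assumes "finite F" "s \<notin> F"
  shows "qf (insert s F) M x = x s * M s s * x s + (\<Sum>j\<in>F. x s * M s j * x j)
     + (\<Sum>i\<in>F. x i * M i s * x s) + qf F M x"
  using assms by (simp add: qf_def sum.distrib algebra_simps)

lemma schur_product:
  assumes "finite I"
  shows "psd_on I A \<Longrightarrow> psd_on I C \<Longrightarrow> psd_on I (\<lambda>i j. A i j * C i j)"
  using assms
proof (induction I arbitrary: A rule: finite_induct)
  case empty
  then show ?case by (simp add: psd_on_def qf_def)
next
  case (insert s F)
  let ?I = "insert s F"
  have symA: "\<forall>i\<in>?I. \<forall>j\<in>?I. A i j = A j i" and symC: "\<forall>i\<in>?I. \<forall>j\<in>?I. C i j = C j i"
    using insert.prems unfolding psd_on_def by blast+
  have fI: "finite ?I" using insert.hyps by simp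
  have CF: "psd_on F C" using psd_on_mono[OF insert.prems(2) fI] by blast
  have "0 \<le> qf ?I (\<lambda>i j. A i j * C i j) x" for x
  proof (cases "A s s = 0")
    case True
    have z1: "A s j = 0" if "j \<in> ?I" for j using psd_zero_row[OF insert.prems(1) fI _ that True] by simp
    have z2: "A j s = 0" if "j \<in> ?I" for j
    proof -
      have "A j s = A s j" using symA that by blast
      then show ?thesis using z1[OF that] by simp
    qed
    have AF: "psd_on F A" using psd_on_mono[OF insert.prems(1) fI] by blast
    have "qf ?I (\<lambda>i j. A i j * C i j) x = qf F (\<lambda>i j. A i j * C i j) x"
      unfolding qf_insert[OF insert.hyps] using z1 z2 by simp
    then show ?thesis using insert.IH[OF AF CF] unfolding psd_on_def by simp
  next
    case False
    have pos: "0 < A s s" using psd_diag[OF insert.prems(1) fI] False by force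
    define B where "B = piv A s"
    have BI: "psd_on ?I B" unfolding B_def by (rule psd_piv[OF insert.prems(1) fI _ pos]) simp
    have BF: "psd_on F B" using psd_on_mono[OF BI fI] by blast
    have split: "qf ?I (\<lambda>i j. A i j * C i j) x =
      qf ?I (\<lambda>i j. B i j * C i j) x + qf ?I C (\<lambda>i. x i * A s i) / A s s"
    proof -
      have pt: "x i * (A i j * C i j) * x j = x i * (B i j * C i j) * x j + (x i * A s i) * C i j * (x j * A s j) / A s s"
        if "i \<in> ?I" "j \<in> ?I" for i j
      proof -
        have "A i s = A s i" using symA that by blast
        then show ?thesis using False by (simp add: B_def piv_def field_simps)
      qed
      show ?thesis unfolding qf_def sum_divide_distrib sum.distrib[symmetric]
        by (intro sum.cong refl) (simp add: pt)
    qed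
    have "qf ?I (\<lambda>i j. B i j * C i j) x = qf F (\<lambda>i j. B i j * C i j) x"
      unfolding qf_insert[OF insert.hyps] B_def using False by (simp add: piv_row piv_col)
    moreover have "0 \<le> qf F (\<lambda>i j. B i j * C i j) x" using insert.IH[OF BF CF] unfolding psd_on_def by simp
    moreover have "0 \<le> qf ?I C (\<lambda>i. x i * A s i)" using insert.prems(2) unfolding psd_on_def by simp
    ultimately show ?thesis unfolding split using pos by simp
  qed
  moreover have "\<forall>i\<in>?I. \<forall>j\<in>?I. A i j * C i j = A j i * C j i"
  proof (intro ballI)
    fix i j assume "i \<in> ?I" "j \<in> ?I"
    then have "A i j = A j i" "C i j = C j i" using symA symC by blast+
    then show "A i j * C i j = A j i * C j i" by simp
  qed
  ultimately show ?case unfolding psd_on_def by blast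
qed

definition E6 :: "real \<Rightarrow> (nat \<Rightarrow> nat \<Rightarrow> real) \<Rightarrow> nat set \<Rightarrow> nat set \<Rightarrow> nat set \<Rightarrow> nat set \<Rightarrow> nat set \<Rightarrow> nat set \<Rightarrow> nat set \<Rightarrow> real" where
  "E6 r A S T1 T2 T3 T4 T5 T6 = (r + 1) * pminor A (S \<union> T1) * pminor A (S \<union> T2)
     + r * (r + 1) * pminor A (S \<union> T3) * pminor A (S \<union> T4) - r * pminor A (S \<union> T5) * pminor A (S \<union> T6)"

lemma E6_aux:
  fixes r a p1 p2 p3 p4 p5 p6 :: real
  shows "(r + 1) * (a * p1) * (a * p2) + r * (r + 1) * (a * p3) * (a * p4) - r * (a * p5) * (a * p6)
    = (a * a) * ((r + 1) * p1 * p2 + r * (r + 1) * p3 * p4 - r * p5 * p6)"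
  by (simp add: algebra_simps)

lemma reduce_S:
  assumes base: "\<And>A. psd_on I A \<Longrightarrow> 0 \<le> E6 r A {} T1 T2 T3 T4 T5 T6"
    and fI: "finite I"
    and T: "T1 \<subseteq> I" "T2 \<subseteq> I" "T3 \<subseteq> I" "T4 \<subseteq> I" "T5 \<subseteq> I" "T6 \<subseteq> I"
    and JS: "S \<inter> (T1 \<union> T2 \<union> T3 \<union> T4 \<union> T5 \<union> T6) = {}" "S \<subseteq> I"
  shows "psd_on I A \<Longrightarrow> 0 \<le> E6 r A S T1 T2 T3 T4 T5 T6"
proof -
  have fS: "finite S" using JS(2) fI finite_subset by blast
  show "psd_on I A \<Longrightarrow> 0 \<le> E6 r A S T1 T2 T3 T4 T5 T6"
    using fS JS
  proof (induction S arbitrary: A rule: finite_induct)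
    case empty
    then show ?case using base by simp
  next
    case (insert s S)
    have sI: "s \<in> I" using insert.prems by auto
    have fin: "finite (insert s S \<union> Tk)" if "Tk \<subseteq> I" for Tk
      using that insert.prems fI finite_subset by auto
    show ?case
    proof (cases "A s s = 0")
      case True
      have z: "pminor A (insert s S \<union> Tk) = 0" if "Tk \<subseteq> I" for Tk
        by (rule pminor_zero_row[OF fin[OF that], of s])
           (use psd_zero_row[OF insert.prems(1) fI sI _ True] that insert.prems in auto)
      show ?thesis unfolding E6_def using z T by simp
    next
      case False
      have pos: "0 < A s s" using psd_diag[OF insert.prems(1) fI sI] False by force
      define B where "B = piv A s"
      have BI: "psd_on I B" unfolding B_def by (rule psd_piv[OF insert.prems(1) fI sI pos])
      have pv: "pminor A (insert s S \<union> Tk) = A s s * pminor B (S \<union> Tk)"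
        if "Tk \<subseteq> I" "s \<notin> Tk" for Tk
      proof -
        have "insert s S \<union> Tk - {s} = S \<union> Tk" using that insert.hyps by auto
        then show ?thesis using pminor_pivot[OF fin[OF that(1)], of s A] False unfolding B_def by simp
      qed
      have sT: "s \<notin> T1" "s \<notin> T2" "s \<notin> T3" "s \<notin> T4" "s \<notin> T5" "s \<notin> T6"
        using insert.prems(2) by auto
      have IH: "0 \<le> E6 r B S T1 T2 T3 T4 T5 T6"
        using insert.IH[OF BI] insert.prems by auto
      have "E6 r A (insert s S) T1 T2 T3 T4 T5 T6 =
        (r + 1) * (A s s * pminor B (S \<union> T1)) * (A s s * pminor B (S \<union> T2))
        + r * (r + 1) * (A s s * pminor B (S \<union> T3)) * (A s s * pminor B (S \<union> T4))
        - r * (A s s * pminor B (S \<union> T5)) * (A s s * pminor B (S \<union> T6))"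
        unfolding E6_def by (simp only: pv T sT not_False_eq_True)
      also have "\<dots> = (A s s * A s s) * E6 r B S T1 T2 T3 T4 T5 T6"
        unfolding E6_def by (rule E6_aux)
      finally have "E6 r A (insert s S) T1 T2 T3 T4 T5 T6 = (A s s * A s s) * E6 r B S T1 T2 T3 T4 T5 T6" .
      moreover have "0 \<le> (A s s * A s s) * E6 r B S T1 T2 T3 T4 T5 T6"
        by (rule mult_nonneg_nonneg[OF _ IH]) simp
      ultimately show ?thesis by (simp only:)
    qed
  qed
qed



definition Hf :: "real \<Rightarrow> real \<Rightarrow> real \<Rightarrow> real" where
  "Hf a b c = 2 * (a * b + b * c + c * a) - a * a - b * b - c * c"

lemma Hf_swap12: "Hf a b c = Hf b a c" by (simp add: Hf_def algebra_simps)
lemma Hf_swap23: "Hf a b c = Hf a c b" by (simp add: Hf_def algebra_simps)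
lemma Hf_swap13: "Hf a b c = Hf c b a" by (simp add: Hf_def algebra_simps)
lemma Hf_scale: "Hf (k * a) (k * b) (k * c) = (k * k) * Hf a b c" by (simp add: Hf_def algebra_simps)

lemma cancel_pos:
  fixes k x :: real
  assumes "0 \<le> k * x" "0 < k"
  shows "0 \<le> x"
  using assms by (simp add: zero_le_mult_iff)

lemma quad_from_H:
  fixes a b c r :: real
  assumes a: "0 \<le> a" and b: "0 \<le> b" and H: "0 \<le> Hf a b c"
  shows "r * c \<le> (r + 1) * a + r * (r + 1) * b"
proof (cases "b = 0")
  case True
  then have "0 \<le> - ((a - c) * (a - c))" using H by (simp add: Hf_def algebra_simps)
  then have "(a - c) * (a - c) \<le> 0" by simp
  moreover have "0 \<le> (a - c) * (a - c)" by simp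
  ultimately have "(a - c) * (a - c) = 0" by linarith
  then have "a = c" by simp
  then show ?thesis using True a by (simp add: algebra_simps)
next
  case False
  then have bp: "0 < b" using b by simp
  have id: "4 * b * ((r + 1) * a + r * (r + 1) * b - r * c) = (2 * b * r + (a + b - c)) * (2 * b * r + (a + b - c)) + Hf a b c"
    by (simp add: Hf_def algebra_simps)
  have "0 \<le> 4 * b * ((r + 1) * a + r * (r + 1) * b - r * c)" unfolding id using H by simp
  then have "0 \<le> (r + 1) * a + r * (r + 1) * b - r * c" using bp by (simp add: zero_le_mult_iff)
  then show ?thesis by simp
qed

lemma cs2:
  fixes p q r :: real
  assumes p: "0 \<le> p" and f: "\<And>t. 0 \<le> t * t * p + 2 * t * q + r"
  shows "q * q \<le> p * r"
proof (cases "p = 0")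
  case True
  have "q = 0"
  proof (rule ccontr)
    assume q: "q \<noteq> 0"
    have "0 \<le> (-(r + 1) / (2 * q)) * (-(r + 1) / (2 * q)) * p + 2 * (-(r + 1) / (2 * q)) * q + r" by (rule f)
    also have "\<dots> = -1" using q True by (simp add: field_simps)
    finally show False by simp
  qed
  then show ?thesis using True by simp
next
  case False
  then have pp: "0 < p" using p by simp
  have "0 \<le> (- q / p) * (- q / p) * p + 2 * (- q / p) * q + r" by (rule f)
  also have "\<dots> = (p * r - q * q) / p" using False by (simp add: field_simps)
  finally show ?thesis using pp by (simp add: zero_le_divide_iff)
qed

lemma tri_core:
  fixes g11 g12 g22 :: real
  assumes "g12 * g12 \<le> g11 * g22"
  shows "0 \<le> Hf (g11 + g22 - 2 * g12) g11 g22"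
proof -
  have "Hf (g11 + g22 - 2 * g12) g11 g22 = 4 * (g11 * g22 - g12 * g12)"
    by (simp add: Hf_def algebra_simps)
  then show ?thesis using assms by simp
qed

definition Phi3 :: "real \<Rightarrow> real \<Rightarrow> real \<Rightarrow> real \<Rightarrow> real \<Rightarrow> real \<Rightarrow> real \<Rightarrow> real \<Rightarrow> real \<Rightarrow> real" where
  "Phi3 g11 g22 g33 g12 g13 g23 y1 y2 y3 = y1 * y1 * g11 + y2 * y2 * g22 + y3 * y3 * g33
     + 2 * y1 * y2 * g12 + 2 * y1 * y3 * g13 + 2 * y2 * y3 * g23"

lemma ptol_dir:
  fixes g11 g22 g33 g12 g13 g23 :: real
  assumes form: "\<And>y1 y2 y3. 0 \<le> Phi3 g11 g22 g33 g12 g13 g23 y1 y2 y3" and g3: "0 < g33"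
  shows "0 \<le> Hf ((g11 + g22 - 2 * g12) * g33) ((g11 + g33 - 2 * g13) * g22) (g11 * (g22 + g33 - 2 * g23))"
proof -
  define P where "P = g33 * g33 * g11 + g11 * g11 * g33 - 2 * g33 * g11 * g13"
  define R where "R = g33 * g33 * g22 + g22 * g22 * g33 - 2 * g33 * g22 * g23"
  define Q where "Q = g33 * (g12 * g33 - g13 * g22) - g11 * (g23 * g33 - g33 * g22)"
  have e: "Phi3 g11 g22 g33 g12 g13 g23 (t * g33) g33 (- t * g11 - g22) = t * t * P + 2 * t * Q + R" for t
    unfolding Phi3_def P_def Q_def R_def by (simp add: algebra_simps)
  have P0: "0 \<le> P" using form[of g33 0 "- g11"] unfolding Phi3_def P_def by (simp add: algebra_simps)
  have cs: "Q * Q \<le> P * R" by (rule cs2[OF P0]) (use form e in metis)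
  have id: "g33 * g33 * Hf ((g11 + g22 - 2 * g12) * g33) ((g11 + g33 - 2 * g13) * g22) (g11 * (g22 + g33 - 2 * g23))
     = 4 * (P * R - Q * Q)"
    unfolding Hf_def P_def Q_def R_def by (simp add: algebra_simps)
  have "0 \<le> g33 * g33 * Hf ((g11 + g22 - 2 * g12) * g33) ((g11 + g33 - 2 * g13) * g22) (g11 * (g22 + g33 - 2 * g23))"
    unfolding id using cs by simp
  moreover have "0 < g33 * g33" using g3 by simp
  ultimately show ?thesis by (rule cancel_pos)
qed


lemma ptol_core:
  fixes g11 g22 g33 g12 g13 g23 :: real
  assumes form: "\<And>y1 y2 y3. 0 \<le> Phi3 g11 g22 g33 g12 g13 g23 y1 y2 y3"
  shows "0 \<le> Hf ((g11 + g22 - 2 * g12) * g33) ((g11 + g33 - 2 * g13) * g22) (g11 * (g22 + g33 - 2 * g23))"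
proof -
  have d1: "0 \<le> g11" using form[of 1 0 0] by (simp add: Phi3_def)
  have d2: "0 \<le> g22" using form[of 0 1 0] by (simp add: Phi3_def)
  have d3: "0 \<le> g33" using form[of 0 0 1] by (simp add: Phi3_def)
  consider "0 < g33" | "0 < g22" | "0 < g11" | "g11 = 0" "g22 = 0" "g33 = 0" using d1 d2 d3 by linarith
  then show ?thesis
  proof cases
    case 1
    then show ?thesis using ptol_dir[OF form] by blast
  next
    case 2
    have f: "0 \<le> Phi3 g11 g33 g22 g13 g12 g23 y1 y2 y3" for y1 y2 y3
    proof -
      have "Phi3 g11 g33 g22 g13 g12 g23 y1 y2 y3 = Phi3 g11 g22 g33 g12 g13 g23 y1 y3 y2"
        by (simp add: Phi3_def algebra_simps)
      then show ?thesis using form by simp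
    qed
    have h: "0 \<le> Hf ((g11 + g33 - 2 * g13) * g22) ((g11 + g22 - 2 * g12) * g33) (g11 * (g33 + g22 - 2 * g23))"
      by (rule ptol_dir[OF f 2])
    have e: "g11 * (g33 + g22 - 2 * g23) = g11 * (g22 + g33 - 2 * g23)" by (simp add: algebra_simps)
    show ?thesis using h unfolding e by (simp only: Hf_swap12[of "(g11 + g33 - 2 * g13) * g22"])
  next
    case 3
    have f: "0 \<le> Phi3 g33 g22 g11 g23 g13 g12 y1 y2 y3" for y1 y2 y3
    proof -
      have "Phi3 g33 g22 g11 g23 g13 g12 y1 y2 y3 = Phi3 g11 g22 g33 g12 g13 g23 y3 y2 y1"
        by (simp add: Phi3_def algebra_simps)
      then show ?thesis using form by simp
    qed
    have h: "0 \<le> Hf ((g33 + g22 - 2 * g23) * g11) ((g33 + g11 - 2 * g13) * g22) (g33 * (g22 + g11 - 2 * g12))"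
      by (rule ptol_dir[OF f 3])
    have e1: "(g33 + g22 - 2 * g23) * g11 = g11 * (g22 + g33 - 2 * g23)" by (simp add: algebra_simps)
    have e2: "(g33 + g11 - 2 * g13) * g22 = (g11 + g33 - 2 * g13) * g22" by (simp add: algebra_simps)
    have e3: "g33 * (g22 + g11 - 2 * g12) = (g11 + g22 - 2 * g12) * g33" by (simp add: algebra_simps)
    show ?thesis using h unfolding e1 e2 e3 by (simp only: Hf_swap13[of "g11 * (g22 + g33 - 2 * g23)"])
  next
    case 4
    then show ?thesis by (simp add: Hf_def)
  qed
qed

definition KK :: "(nat \<Rightarrow> nat \<Rightarrow> real) \<Rightarrow> nat \<Rightarrow> nat \<Rightarrow> real" where
  "KK A i j = A i j * A i j / (A i i * A j j)"

lemma KK_psd: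
  assumes "psd_on I A" "finite I" "\<And>i. i \<in> I \<Longrightarrow> 0 < A i i"
  shows "psd_on I (KK A)"
proof -
  have AA: "psd_on I (\<lambda>i j. A i j * A i j)" by (rule schur_product[OF assms(2,1,1)])
  have sym: "\<forall>i\<in>I. \<forall>j\<in>I. A i j = A j i" using assms(1) unfolding psd_on_def by blast
  have "\<forall>i\<in>I. \<forall>j\<in>I. KK A i j = KK A j i"
  proof (intro ballI)
    fix i j assume "i \<in> I" "j \<in> I"
    then have "A i j = A j i" using sym by blast
    then show "KK A i j = KK A j i" by (simp add: KK_def mult.commute)
  qed
  moreover have "0 \<le> qf I (KK A) w" for w
  proof -
    have "qf I (KK A) w = qf I (\<lambda>i j. A i j * A i j) (\<lambda>i. w i / A i i)"
      unfolding qf_def KK_def by (intro sum.cong refl) (simp add: field_simps)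
    then show ?thesis using AA unfolding psd_on_def by simp
  qed
  ultimately show ?thesis unfolding psd_on_def by blast
qed

lemma qf4_Phi3:
  assumes sym: "\<And>i j. i \<in> {1,2,3,4} \<Longrightarrow> j \<in> {1,2,3,4} \<Longrightarrow> K i j = K j i"
  shows "qf {1,2,3,4} K (\<lambda>i. if i = 1 then y1 else if i = 2 then y2 else if i = 3 then y3 else - (y1 + y2 + y3))
    = Phi3 (K 1 1 - 2 * K 1 4 + K 4 4) (K 2 2 - 2 * K 2 4 + K 4 4) (K 3 3 - 2 * K 3 4 + K 4 4)
        (K 1 2 - K 1 4 - K 2 4 + K 4 4) (K 1 3 - K 1 4 - K 3 4 + K 4 4) (K 2 3 - K 2 4 - K 3 4 + K 4 4) y1 y2 y3"
proof -
  have s: "K 2 (Suc 0) = K (Suc 0) 2" "K 3 (Suc 0) = K (Suc 0) 3" "K 4 (Suc 0) = K (Suc 0) 4" "K 3 2 = K 2 3" "K 4 2 = K 2 4" "K 4 3 = K 3 4"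
    using sym[of 2 1] sym[of 3 1] sym[of 4 1] sym[of 3 2] sym[of 4 2] sym[of 4 3] by auto
  show ?thesis unfolding qf_def Phi3_def by (simp add: s algebra_simps)
qed

lemma qf3_form:
  assumes sym: "\<And>i j. i \<in> {1,2,3} \<Longrightarrow> j \<in> {1,2,3} \<Longrightarrow> K i j = K j i"
  shows "qf {1,2,3} K (\<lambda>i. if i = 1 then y1 else if i = 2 then y2 else - (y1 + y2))
    = y1 * y1 * (K 1 1 - 2 * K 1 3 + K 3 3) + 2 * y1 * y2 * (K 1 2 - K 1 3 - K 2 3 + K 3 3) + y2 * y2 * (K 2 2 - 2 * K 2 3 + K 3 3)"
proof -
  have s: "K 2 (Suc 0) = K (Suc 0) 2" "K 3 (Suc 0) = K (Suc 0) 3" "K 3 2 = K 2 3"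
    using sym[of 2 1] sym[of 3 1] sym[of 3 2] by auto
  show ?thesis unfolding qf_def by (simp add: s algebra_simps)
qed

lemma delta_eq:
  fixes aii ajj aij :: real
  assumes "0 < aii" "0 < ajj"
  shows "aii * aii / (aii * aii) + ajj * ajj / (ajj * ajj) - 2 * (aij * aij / (aii * ajj)) = 2 * (aii * ajj - aij * aij) / (aii * ajj)"
  using assms by (simp add: field_simps)


lemma base4:
  assumes A: "psd_on I A" and fI: "finite I" and sub: "{1,2,3,4} \<subseteq> I"
  shows "0 \<le> E6 r A {} {1,4} {2,3} {1,3} {2,4} {1,2} {3,4}"
proof -
  define P where "P i j = A i i * A j j - A i j * A i j" for i j
  have sym: "A i j = A j i" if "i \<in> I" "j \<in> I" for i j using A that unfolding psd_on_def by blast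
  have pm: "pminor A {i,j} = P i j" if "i \<in> I" "j \<in> I" "i \<noteq> j" for i j
    using pminor_two[OF that(3), of A] sym[OF that(1,2)] by (simp add: P_def)
  have Pn: "0 \<le> P i j" if "i \<in> I" "j \<in> I" for i j using psd_minor2[OF A fI that] by (simp add: P_def)
  have inI: "1 \<in> I" "2 \<in> I" "3 \<in> I" "4 \<in> I" using sub by auto
  define a where "a = P 1 4 * P 2 3"
  define b where "b = P 1 3 * P 2 4"
  define c where "c = P 1 2 * P 3 4"
  have p14: "pminor A {1,4} = P 1 4" by (rule pm) (use inI in auto)
  have p23: "pminor A {2,3} = P 2 3" by (rule pm) (use inI in auto)
  have p13: "pminor A {1,3} = P 1 3" by (rule pm) (use inI in auto)
  have p24: "pminor A {2,4} = P 2 4" by (rule pm) (use inI in auto)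
  have p12: "pminor A {1,2} = P 1 2" by (rule pm) (use inI in auto)
  have p34: "pminor A {3,4} = P 3 4" by (rule pm) (use inI in auto)
  have E: "E6 r A {} {1,4} {2,3} {1,3} {2,4} {1,2} {3,4} = (r + 1) * a + r * (r + 1) * b - r * c"
    unfolding E6_def a_def b_def c_def by (simp only: Un_empty_left p14 p23 p13 p24 p12 p34 mult.assoc)
  have a0: "0 \<le> a" unfolding a_def using Pn inI by simp
  have b0: "0 \<le> b" unfolding b_def using Pn inI by simp
  have H: "0 \<le> Hf a b c"
  proof (cases "0 < A 1 1 \<and> 0 < A 2 2 \<and> 0 < A 3 3 \<and> 0 < A 4 4")
    case False
    have dn: "0 \<le> A i i" if "i \<in> I" for i using psd_diag[OF A fI that] .
    have k: "A 1 1 = 0 \<or> A 2 2 = 0 \<or> A 3 3 = 0 \<or> A 4 4 = 0"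
      using False dn[OF inI(1)] dn[OF inI(2)] dn[OF inI(3)] dn[OF inI(4)] by linarith
    have z1: "P k j = 0" if "k \<in> I" "j \<in> I" "A k k = 0" for k j
      using psd_zero_row[OF A fI that] that(3) by (simp add: P_def)
    have z2: "P j k = 0" if "k \<in> I" "j \<in> I" "A k k = 0" for k j
      using psd_zero_row[OF A fI that] that(3) sym[OF that(1,2)] by (simp add: P_def)
    have "a = 0 \<and> b = 0 \<and> c = 0"
      using k
    proof (elim disjE)
      assume h: "A 1 1 = 0"
      show ?thesis using z1[OF inI(1) inI(4) h] z1[OF inI(1) inI(3) h] z1[OF inI(1) inI(2) h]
        by (simp add: a_def b_def c_def)
    next
      assume h: "A 2 2 = 0"
      show ?thesis using z1[OF inI(2) inI(3) h] z1[OF inI(2) inI(4) h] z2[OF inI(2) inI(1) h]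
        by (simp add: a_def b_def c_def)
    next
      assume h: "A 3 3 = 0"
      show ?thesis using z2[OF inI(3) inI(2) h] z2[OF inI(3) inI(1) h] z1[OF inI(3) inI(4) h]
        by (simp add: a_def b_def c_def)
    next
      assume h: "A 4 4 = 0"
      show ?thesis using z2[OF inI(4) inI(1) h] z2[OF inI(4) inI(2) h] z2[OF inI(4) inI(3) h]
        by (simp add: a_def b_def c_def)
    qed
    then show ?thesis by (simp add: Hf_def)
  next
    case True
    have pos: "0 < A i i" if "i \<in> {1,2,3,4}" for i using True that by auto
    have Kp: "psd_on {1,2,3,4} (KK A)"
      by (rule KK_psd[OF psd_on_mono[OF A fI sub]]) (use pos in auto)
    have Ks: "KK A i j = KK A j i" if "i \<in> {1,2,3,4}" "j \<in> {1,2,3,4}" for i j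
      using Kp that unfolding psd_on_def by blast
    let ?K = "KK A"
    have form: "0 \<le> Phi3 (?K 1 1 - 2 * ?K 1 4 + ?K 4 4) (?K 2 2 - 2 * ?K 2 4 + ?K 4 4) (?K 3 3 - 2 * ?K 3 4 + ?K 4 4)
        (?K 1 2 - ?K 1 4 - ?K 2 4 + ?K 4 4) (?K 1 3 - ?K 1 4 - ?K 3 4 + ?K 4 4) (?K 2 3 - ?K 2 4 - ?K 3 4 + ?K 4 4) y1 y2 y3"
      for y1 y2 y3
    proof -
      have "0 \<le> qf {1,2,3,4} ?K (\<lambda>i. if i = 1 then y1 else if i = 2 then y2 else if i = 3 then y3 else - (y1 + y2 + y3))"
        using Kp unfolding psd_on_def by blast
      then show ?thesis by (simp only: qf4_Phi3[of "KK A" y1 y2 y3, OF Ks])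
    qed
    note pc = ptol_core[OF form]
    define d where "d i j = 2 * P i j / (A i i * A j j)" for i j
    have dK: "?K i i + ?K j j - 2 * ?K i j = d i j" if "i \<in> {1,2,3,4}" "j \<in> {1,2,3,4}" for i j
      unfolding KK_def d_def P_def by (rule delta_eq[OF pos[OF that(1)] pos[OF that(2)]])
    have g1: "(?K 1 1 - 2 * ?K 1 4 + ?K 4 4) + (?K 2 2 - 2 * ?K 2 4 + ?K 4 4) - 2 * (?K 1 2 - ?K 1 4 - ?K 2 4 + ?K 4 4) = d 1 2"
      using dK[of 1 2] by (simp add: algebra_simps)
    have g2: "(?K 1 1 - 2 * ?K 1 4 + ?K 4 4) + (?K 3 3 - 2 * ?K 3 4 + ?K 4 4) - 2 * (?K 1 3 - ?K 1 4 - ?K 3 4 + ?K 4 4) = d 1 3"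
      using dK[of 1 3] by (simp add: algebra_simps)
    have g3: "(?K 2 2 - 2 * ?K 2 4 + ?K 4 4) + (?K 3 3 - 2 * ?K 3 4 + ?K 4 4) - 2 * (?K 2 3 - ?K 2 4 - ?K 3 4 + ?K 4 4) = d 2 3"
      using dK[of 2 3] by (simp add: algebra_simps)
    have h1: "?K 1 1 - 2 * ?K 1 4 + ?K 4 4 = d 1 4" using dK[of 1 4] by (simp add: algebra_simps)
    have h2: "?K 2 2 - 2 * ?K 2 4 + ?K 4 4 = d 2 4" using dK[of 2 4] by (simp add: algebra_simps)
    have h3: "?K 3 3 - 2 * ?K 3 4 + ?K 4 4 = d 3 4" using dK[of 3 4] by (simp add: algebra_simps)
    have H0: "0 \<le> Hf (d 1 2 * d 3 4) (d 1 3 * d 2 4) (d 1 4 * d 2 3)"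
      using pc[unfolded g1 g2 g3, unfolded h1 h2 h3] .
    define \<kappa> where "\<kappa> = 4 / (A 1 1 * A 2 2 * A 3 3 * A 4 4)"
    have kp: "0 < \<kappa>" unfolding \<kappa>_def using pos by simp
    have x1: "d 1 2 * d 3 4 = \<kappa> * c" unfolding d_def c_def \<kappa>_def using pos by (simp add: field_simps)
    have x2: "d 1 3 * d 2 4 = \<kappa> * b" unfolding d_def b_def \<kappa>_def using pos by (simp add: field_simps)
    have x3: "d 1 4 * d 2 3 = \<kappa> * a" unfolding d_def a_def \<kappa>_def using pos by (simp add: field_simps)
    have "0 \<le> (\<kappa> * \<kappa>) * Hf c b a" using H0 unfolding x1 x2 x3 Hf_scale .
    then have "0 \<le> Hf c b a" by (rule cancel_pos) (use kp in simp)
    then show ?thesis by (simp only: Hf_swap13[of a])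
  qed
  have "r * c \<le> (r + 1) * a + r * (r + 1) * b" by (rule quad_from_H[OF a0 b0 H])
  then show ?thesis unfolding E by simp
qed

lemma base3:
  assumes A: "psd_on I A" and fI: "finite I" and sub: "{1,2,3} \<subseteq> I"
  shows "0 \<le> E6 r A {} {1} {2,3} {2} {1,3} {3} {1,2}"
proof -
  define P where "P i j = A i i * A j j - A i j * A i j" for i j
  have sym: "A i j = A j i" if "i \<in> I" "j \<in> I" for i j using A that unfolding psd_on_def by blast
  have pm: "pminor A {i,j} = P i j" if "i \<in> I" "j \<in> I" "i \<noteq> j" for i j
    using pminor_two[OF that(3), of A] sym[OF that(1,2)] by (simp add: P_def)
  have Pn: "0 \<le> P i j" if "i \<in> I" "j \<in> I" for i j using psd_minor2[OF A fI that] by (simp add: P_def)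
  have dn: "0 \<le> A i i" if "i \<in> I" for i using psd_diag[OF A fI that] .
  have inI: "1 \<in> I" "2 \<in> I" "3 \<in> I" using sub by auto
  define a where "a = A 1 1 * P 2 3"
  define b where "b = A 2 2 * P 1 3"
  define c where "c = A 3 3 * P 1 2"
  have p23: "pminor A {2,3} = P 2 3" by (rule pm) (use inI in auto)
  have p13: "pminor A {1,3} = P 1 3" by (rule pm) (use inI in auto)
  have p12: "pminor A {1,2} = P 1 2" by (rule pm) (use inI in auto)
  have E: "E6 r A {} {1} {2,3} {2} {1,3} {3} {1,2} = (r + 1) * a + r * (r + 1) * b - r * c"
    unfolding E6_def a_def b_def c_def by (simp only: Un_empty_left p23 p13 p12 pminor_one mult.assoc)
  have a0: "0 \<le> a" unfolding a_def using Pn dn inI by simp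
  have b0: "0 \<le> b" unfolding b_def using Pn dn inI by simp
  have H: "0 \<le> Hf a b c"
  proof (cases "0 < A 1 1 \<and> 0 < A 2 2 \<and> 0 < A 3 3")
    case False
    have k: "A 1 1 = 0 \<or> A 2 2 = 0 \<or> A 3 3 = 0"
      using False dn[OF inI(1)] dn[OF inI(2)] dn[OF inI(3)] by linarith
    have z1: "P k j = 0" if "k \<in> I" "j \<in> I" "A k k = 0" for k j
      using psd_zero_row[OF A fI that] that(3) by (simp add: P_def)
    have z2: "P j k = 0" if "k \<in> I" "j \<in> I" "A k k = 0" for k j
      using psd_zero_row[OF A fI that] that(3) sym[OF that(1,2)] by (simp add: P_def)
    have "a = 0 \<and> b = 0 \<and> c = 0"
      using k
    proof (elim disjE)
      assume h: "A 1 1 = 0"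
      show ?thesis using h z1[OF inI(1) inI(3) h] z1[OF inI(1) inI(2) h]
        by (simp add: a_def b_def c_def)
    next
      assume h: "A 2 2 = 0"
      show ?thesis using h z1[OF inI(2) inI(3) h] z2[OF inI(2) inI(1) h]
        by (simp add: a_def b_def c_def)
    next
      assume h: "A 3 3 = 0"
      show ?thesis using h z2[OF inI(3) inI(2) h] z2[OF inI(3) inI(1) h]
        by (simp add: a_def b_def c_def)
    qed
    then show ?thesis by (simp add: Hf_def)
  next
    case True
    have pos: "0 < A i i" if "i \<in> {1,2,3}" for i using True that by auto
    have Kp: "psd_on {1,2,3} (KK A)"
      by (rule KK_psd[OF psd_on_mono[OF A fI sub]]) (use pos in auto)
    have Ks: "KK A i j = KK A j i" if "i \<in> {1,2,3}" "j \<in> {1,2,3}" for i j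
      using Kp that unfolding psd_on_def by blast
    let ?K = "KK A"
    have form: "0 \<le> y1 * y1 * (?K 1 1 - 2 * ?K 1 3 + ?K 3 3) + 2 * y1 * y2 * (?K 1 2 - ?K 1 3 - ?K 2 3 + ?K 3 3) + y2 * y2 * (?K 2 2 - 2 * ?K 2 3 + ?K 3 3)"
      for y1 y2
    proof -
      have "0 \<le> qf {1,2,3} ?K (\<lambda>i. if i = 1 then y1 else if i = 2 then y2 else - (y1 + y2))"
        using Kp unfolding psd_on_def by blast
      then show ?thesis by (simp only: qf3_form[of "KK A" y1 y2, OF Ks])
    qed
    have g0: "0 \<le> ?K 1 1 - 2 * ?K 1 3 + ?K 3 3" using form[of 1 0] by simp
    have cs: "(?K 1 2 - ?K 1 3 - ?K 2 3 + ?K 3 3) * (?K 1 2 - ?K 1 3 - ?K 2 3 + ?K 3 3)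
        \<le> (?K 1 1 - 2 * ?K 1 3 + ?K 3 3) * (?K 2 2 - 2 * ?K 2 3 + ?K 3 3)"
      by (rule cs2[OF g0]) (use form[of _ 1] in simp)
    note tc = tri_core[OF cs]
    define d where "d i j = 2 * P i j / (A i i * A j j)" for i j
    have dK: "?K i i + ?K j j - 2 * ?K i j = d i j" if "i \<in> {1,2,3}" "j \<in> {1,2,3}" for i j
      unfolding KK_def d_def P_def by (rule delta_eq[OF pos[OF that(1)] pos[OF that(2)]])
    have g1: "(?K 1 1 - 2 * ?K 1 3 + ?K 3 3) + (?K 2 2 - 2 * ?K 2 3 + ?K 3 3) - 2 * (?K 1 2 - ?K 1 3 - ?K 2 3 + ?K 3 3) = d 1 2"
      using dK[of 1 2] by (simp add: algebra_simps)
    have h1: "?K 1 1 - 2 * ?K 1 3 + ?K 3 3 = d 1 3" using dK[of 1 3] by (simp add: algebra_simps)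
    have h2: "?K 2 2 - 2 * ?K 2 3 + ?K 3 3 = d 2 3" using dK[of 2 3] by (simp add: algebra_simps)
    have H0: "0 \<le> Hf (d 1 2) (d 1 3) (d 2 3)"
      using tc[unfolded g1, unfolded h1 h2] .
    define \<kappa> where "\<kappa> = 2 / (A 1 1 * A 2 2 * A 3 3)"
    have kp: "0 < \<kappa>" unfolding \<kappa>_def using pos by simp
    have x1: "d 1 2 = \<kappa> * c" unfolding d_def c_def \<kappa>_def using True by (simp add: field_simps)
    have x2: "d 1 3 = \<kappa> * b" unfolding d_def b_def \<kappa>_def using True by (simp add: field_simps)
    have x3: "d 2 3 = \<kappa> * a" unfolding d_def a_def \<kappa>_def using True by (simp add: field_simps)
    have "0 \<le> (\<kappa> * \<kappa>) * Hf c b a" using H0 unfolding x1 x2 x3 Hf_scale .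
    then have "0 \<le> Hf c b a" by (rule cancel_pos) (use kp in simp)
    then show ?thesis by (simp only: Hf_swap13[of a])
  qed
  have "r * c \<le> (r + 1) * a + r * (r + 1) * b" by (rule quad_from_H[OF a0 b0 H])
  then show ?thesis unfolding E by simp
qed


lemma main4:
  assumes n: "4 \<le> n" and A: "psd_on {1..n} A" and S: "S \<subseteq> {1..n} - {1,2,3,4}"
  shows "0 \<le> E6 r A S {1,4} {2,3} {1,3} {2,4} {1,2} {3,4}"
proof -
  have sub: "{1,2,3,4} \<subseteq> {1..n}" using n by auto
  have b: "\<And>B. psd_on {1..n} B \<Longrightarrow> 0 \<le> E6 r B {} {1,4} {2,3} {1,3} {2,4} {1,2} {3,4}"
    using base4[OF _ _ sub] by simp
  show ?thesis
    by (rule reduce_S[OF b]) (use sub S A in auto)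
qed

lemma main3:
  assumes n: "3 \<le> n" and A: "psd_on {1..n} A" and S: "S \<subseteq> {1..n} - {1,2,3}"
  shows "0 \<le> E6 r A S {1} {2,3} {2} {1,3} {3} {1,2}"
proof -
  have sub: "{1,2,3} \<subseteq> {1..n}" using n by auto
  have b: "\<And>B. psd_on {1..n} B \<Longrightarrow> 0 \<le> E6 r B {} {1} {2,3} {2} {1,3} {3} {1,2}"
    using base3[OF _ _ sub] by simp
  show ?thesis
    by (rule reduce_S[OF b]) (use sub S A in auto)
qed

lemma zero_sym_psd: "sym_psd n (\<lambda>i j. 0)"
  unfolding sym_psd_def by simp

lemma pminor_zero_mat:
  assumes "finite S" "finite T" "T \<noteq> {}"
  shows "pminor (\<lambda>i j. 0) (S \<union> T) = 0"
proof -
  obtain i where "i \<in> T" using assms(3) by auto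
  then show ?thesis by (intro pminor_zero_row[of "S \<union> T" i]) (use assms in auto)
qed

lemma inf4:
  assumes n: "4 \<le> n" and S: "S \<subseteq> {1..n} - {1,2,3,4}"
  shows "(INF A\<in>{A. sym_psd n A}. E6 r A S {1,4} {2,3} {1,3} {2,4} {1,2} {3,4}) = 0"
proof (rule cInf_eq_minimum)
  have fS: "finite S" using S finite_subset by blast
  have z0: "pminor (\<lambda>i j. 0) (S \<union> {1,4}) = 0" by (rule pminor_zero_mat[OF fS]) auto
  have z1: "pminor (\<lambda>i j. 0) (S \<union> {2,3}) = 0" by (rule pminor_zero_mat[OF fS]) auto
  have z2: "pminor (\<lambda>i j. 0) (S \<union> {1,3}) = 0" by (rule pminor_zero_mat[OF fS]) auto
  have z3: "pminor (\<lambda>i j. 0) (S \<union> {2,4}) = 0" by (rule pminor_zero_mat[OF fS]) auto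
  have z4: "pminor (\<lambda>i j. 0) (S \<union> {1,2}) = 0" by (rule pminor_zero_mat[OF fS]) auto
  have z5: "pminor (\<lambda>i j. 0) (S \<union> {3,4}) = 0" by (rule pminor_zero_mat[OF fS]) auto
  have "E6 r (\<lambda>i j. 0) S {1,4} {2,3} {1,3} {2,4} {1,2} {3,4} = 0"
    unfolding E6_def by (simp only: z0 z1 z2 z3 z4 z5)
  then show "0 \<in> (\<lambda>A. E6 r A S {1,4} {2,3} {1,3} {2,4} {1,2} {3,4}) ` {A. sym_psd n A}"
    using zero_sym_psd by (metis (mono_tags, lifting) image_eqI mem_Collect_eq)
next
  fix x assume "x \<in> (\<lambda>A. E6 r A S {1,4} {2,3} {1,3} {2,4} {1,2} {3,4}) ` {A. sym_psd n A}"
  then obtain A where "sym_psd n A" "x = E6 r A S {1,4} {2,3} {1,3} {2,4} {1,2} {3,4}" by auto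
  then show "0 \<le> x" using main4[OF n _ S] sym_psd_psd_on by simp
qed

lemma inf3:
  assumes n: "3 \<le> n" and S: "S \<subseteq> {1..n} - {1,2,3}"
  shows "(INF A\<in>{A. sym_psd n A}. E6 r A S {1} {2,3} {2} {1,3} {3} {1,2}) = 0"
proof (rule cInf_eq_minimum)
  have fS: "finite S" using S finite_subset by blast
  have z0: "pminor (\<lambda>i j. 0) (S \<union> {1}) = 0" by (rule pminor_zero_mat[OF fS]) auto
  have z1: "pminor (\<lambda>i j. 0) (S \<union> {2,3}) = 0" by (rule pminor_zero_mat[OF fS]) auto
  have z2: "pminor (\<lambda>i j. 0) (S \<union> {2}) = 0" by (rule pminor_zero_mat[OF fS]) auto
  have z3: "pminor (\<lambda>i j. 0) (S \<union> {1,3}) = 0" by (rule pminor_zero_mat[OF fS]) auto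
  have z4: "pminor (\<lambda>i j. 0) (S \<union> {3}) = 0" by (rule pminor_zero_mat[OF fS]) auto
  have z5: "pminor (\<lambda>i j. 0) (S \<union> {1,2}) = 0" by (rule pminor_zero_mat[OF fS]) auto
  have "E6 r (\<lambda>i j. 0) S {1} {2,3} {2} {1,3} {3} {1,2} = 0"
    unfolding E6_def by (simp only: z0 z1 z2 z3 z4 z5)
  then show "0 \<in> (\<lambda>A. E6 r A S {1} {2,3} {2} {1,3} {3} {1,2}) ` {A. sym_psd n A}"
    using zero_sym_psd by (metis (mono_tags, lifting) image_eqI mem_Collect_eq)
next
  fix x assume "x \<in> (\<lambda>A. E6 r A S {1} {2,3} {2} {1,3} {3} {1,2}) ` {A. sym_psd n A}"
  then obtain A where "sym_psd n A" "x = E6 r A S {1} {2,3} {2} {1,3} {3} {1,2}" by auto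
  then show "0 \<le> x" using main3[OF n _ S] sym_psd_psd_on by simp
qed

theorem corollary5p3:
  shows
   "(\<forall>n A S (r::real). 4 \<le> n \<and> sym_psd n A \<and> S \<subseteq> {1..n} - {1,2,3,4} \<longrightarrow>
        (r + 1) * pminor A (S \<union> {1,4}) * pminor A (S \<union> {2,3})
        + r * (r + 1) * pminor A (S \<union> {1,3}) * pminor A (S \<union> {2,4})
        \<ge> r * pminor A (S \<union> {1,2}) * pminor A (S \<union> {3,4}))
  \<and> (\<forall>n A S (r::real). 3 \<le> n \<and> sym_psd n A \<and> S \<subseteq> {1..n} - {1,2,3} \<longrightarrow>
        (r + 1) * pminor A (S \<union> {1}) * pminor A (S \<union> {2,3})
        + r * (r + 1) * pminor A (S \<union> {2}) * pminor A (S \<union> {1,3})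
        \<ge> r * pminor A (S \<union> {3}) * pminor A (S \<union> {1,2}))
  \<and> (\<forall>n S (r::real). 4 \<le> n \<and> S \<subseteq> {1..n} - {1,2,3,4} \<longrightarrow>
        (INF A\<in>{A. sym_psd n A}.
           (r + 1) * pminor A (S \<union> {1,4}) * pminor A (S \<union> {2,3})
           + r * (r + 1) * pminor A (S \<union> {1,3}) * pminor A (S \<union> {2,4})
           - r * pminor A (S \<union> {1,2}) * pminor A (S \<union> {3,4})) = 0)
  \<and> (\<forall>n S (r::real). 3 \<le> n \<and> S \<subseteq> {1..n} - {1,2,3} \<longrightarrow>
        (INF A\<in>{A. sym_psd n A}.
           (r + 1) * pminor A (S \<union> {1}) * pminor A (S \<union> {2,3})
           + r * (r + 1) * pminor A (S \<union> {2}) * pminor A (S \<union> {1,3})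
           - r * pminor A (S \<union> {3}) * pminor A (S \<union> {1,2})) = 0)"
  proof (intro conjI allI impI)
  fix n :: nat and A :: "nat \<Rightarrow> nat \<Rightarrow> real" and S :: "nat set" and r :: real
  assume h: "4 \<le> n \<and> sym_psd n A \<and> S \<subseteq> {1..n} - {1,2,3,4}"
  have "0 \<le> E6 r A S {1,4} {2,3} {1,3} {2,4} {1,2} {3,4}"
    using main4[of n A S r] h sym_psd_psd_on by blast
  then show "(r + 1) * pminor A (S \<union> {1,4}) * pminor A (S \<union> {2,3})
        + r * (r + 1) * pminor A (S \<union> {1,3}) * pminor A (S \<union> {2,4})
        \<ge> r * pminor A (S \<union> {1,2}) * pminor A (S \<union> {3,4})"
    unfolding E6_def by linarith
next
  fix n :: nat and A :: "nat \<Rightarrow> nat \<Rightarrow> real" and S :: "nat set" and r :: real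
  assume h: "3 \<le> n \<and> sym_psd n A \<and> S \<subseteq> {1..n} - {1,2,3}"
  have "0 \<le> E6 r A S {1} {2,3} {2} {1,3} {3} {1,2}"
    using main3[of n A S r] h sym_psd_psd_on by blast
  then show "(r + 1) * pminor A (S \<union> {1}) * pminor A (S \<union> {2,3})
        + r * (r + 1) * pminor A (S \<union> {2}) * pminor A (S \<union> {1,3})
        \<ge> r * pminor A (S \<union> {3}) * pminor A (S \<union> {1,2})"
    unfolding E6_def by linarith
next
  fix n :: nat and S :: "nat set" and r :: real
  assume h: "4 \<le> n \<and> S \<subseteq> {1..n} - {1,2,3,4}"
  show "(INF A\<in>{A. sym_psd n A}.
           (r + 1) * pminor A (S \<union> {1,4}) * pminor A (S \<union> {2,3})
           + r * (r + 1) * pminor A (S \<union> {1,3}) * pminor A (S \<union> {2,4})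
           - r * pminor A (S \<union> {1,2}) * pminor A (S \<union> {3,4})) = 0"
    using inf4[of n S r] h unfolding E6_def by blast
next
  fix n :: nat and S :: "nat set" and r :: real
  assume h: "3 \<le> n \<and> S \<subseteq> {1..n} - {1,2,3}"
  show "(INF A\<in>{A. sym_psd n A}.
           (r + 1) * pminor A (S \<union> {1}) * pminor A (S \<union> {2,3})
           + r * (r + 1) * pminor A (S \<union> {2}) * pminor A (S \<union> {1,3})
           - r * pminor A (S \<union> {3}) * pminor A (S \<union> {1,2})) = 0"
    using inf3[of n S r] h unfolding E6_def by blast
qed

end
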